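(* Inside the quotient field $Q(\mathbb{Z}[q]^{\mathbb{N}})$ one has $$\mathbb{Z}[q]^{\mathbb{N}}[\Phi_{\mathbb{N}}^{-1}]=\mathbb{Z}[q]^{\mathbb{N}}+\mathbb{Z}[q,q^{-1}][\Phi_{\mathbb{N}}^{-1}].$$
   Context: $q$ is an indeterminate, $\Phi_n(q)$ the $n$th cyclotomic polynomial, and $\Phi_{\mathbb{N}}^*$ the multiplicative subset of $\mathbb{Z}[q]$ generated by all $\Phi_n(q)$, $n\in\mathbb{N}$. $\mathbb{Z}[q]^{\mathbb{N}}=\varprojlim_{f\in\Phi_{\mathbb{N}}^*}\mathbb{Z}[q]/(f)$; it is an integral domain in which $q$ is invertible, and the natural map $\mathbb{Z}[q,q^{-1}]\to\mathbb{Z}[q]^{\mathbb{N}}$ is injective, so $\mathbb{Q}(q)\subset Q(\mathbb{Z}[q]^{\mathbb{N}})$, where $Q(\cdot)$ denotes the quotient field. $\mathbb{Z}[q]^{\mathbb{N}}[\Phi_{\mathbb{N}}^{-1}]$ is the subring of $Q(\mathbb{Z}[q]^{\mathbb{N}})$ of fractions $f/g$ with $f\in\mathbb{Z}[q]^{\mathbb{N}}$, $g\in\Phi_{\mathbb{N}}^*$, and $\mathbb{Z}[q,q^{-1}][\Phi_{\mathbb{N}}^{-1}]$ is the subring of $\mathbb{Q}(q)$ of fractions $f/g$ with $f\in\mathbb{Z}[q,q^{-1}]$, $g\in\Phi_{\mathbb{N}}^*$. *)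

theory Defs
  imports Complex_Main "HOL-Computational_Algebra.Polynomial"
begin

definition cyclotomic_complex :: "nat \<Rightarrow> complex poly" where
  "cyclotomic_complex n =
     (\<Prod>k\<in>{k. k < n \<and> coprime k n}. [:- cis (2 * pi * real k / real n), 1:])"

definition cyclotomic :: "nat \<Rightarrow> int poly" where
  "cyclotomic n = (THE p. map_poly of_int p = cyclotomic_complex n)"

inductive_set Phi_star :: "int poly set" where
  one: "1 \<in> Phi_star"
| mult: "n \<ge> 1 \<Longrightarrow> f \<in> Phi_star \<Longrightarrow> cyclotomic n * f \<in> Phi_star"

text \<open>Elements of the inverse limit Z[q]^N = lim_{f in Phi_N^*} Z[q]/(f) are represented by
  families x with x f a representative of the f-component in Z[q]/(f); compatibility
  means that for f | g in Phi_N^* the g-component maps to the f-component.\<close>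
definition habiro :: "(int poly \<Rightarrow> int poly) \<Rightarrow> bool" where
  "habiro x \<longleftrightarrow> (\<forall>f\<in>Phi_star. \<forall>g\<in>Phi_star. f dvd g \<longrightarrow> f dvd (x g - x f))"

definition habiro_eq :: "(int poly \<Rightarrow> int poly) \<Rightarrow> (int poly \<Rightarrow> int poly) \<Rightarrow> bool" where
  "habiro_eq x y \<longleftrightarrow> (\<forall>f\<in>Phi_star. f dvd (x f - y f))"

definition q_inv_mod :: "int poly \<Rightarrow> int poly" where
  "q_inv_mod f = (SOME r. f dvd ([:0, 1:] * r - 1))"

text \<open>The image of the Laurent polynomial p(q) * q^(-k) of Z[q,q^-1] under the natural map
  Z[q,q^-1] -> Z[q]^N.\<close>
definition laurent_to_habiro :: "int poly \<Rightarrow> nat \<Rightarrow> int poly \<Rightarrow> int poly" where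
  "laurent_to_habiro p k = (\<lambda>f. p * q_inv_mod f ^ k)"

end

theory Submission imports Defs "HOL-Computational_Algebra.Fundamental_Theorem_Algebra" begin



abbreviation ci :: "int poly \<Rightarrow> complex poly" where "ci p \<equiv> map_poly of_int p"

lemma ci_add: "ci (p + q) = ci p + ci q"
  by (intro poly_eqI) (simp add: coeff_map_poly)
lemma ci_diff: "ci (p - q) = ci p - ci q"
  by (intro poly_eqI) (simp add: coeff_map_poly)
lemma ci_mult: "ci (p * q) = ci p * ci q"
  by (intro poly_eqI) (simp add: coeff_map_poly coeff_mult)
lemma ci_1: "ci 1 = 1" by simp
lemma ci_prod: "ci (prod f A) = (\<Prod>x\<in>A. ci (f x))"
  by (induction A rule: infinite_finite_induct) (auto simp: ci_mult)
lemma ci_inj: "ci p = ci q \<Longrightarrow> p = q"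
  by (intro poly_eqI, drule arg_cong[where f="\<lambda>p. coeff p _"]) (simp add: coeff_map_poly)
lemma ci_degree: "degree (ci p) = degree p"
  by (rule degree_map_poly) simp
lemma ci_lead: "lead_coeff (ci p) = of_int (lead_coeff p)"
  by (simp add: ci_degree coeff_map_poly)
lemma ci_monom: "ci (monom 1 n) = monom 1 n"
  by (simp add: map_poly_monom)

lemma xn1_roots:
  assumes n: "n > 0"
  shows "(monom 1 n - 1 :: complex poly) = (\<Prod>k<n. [:- cis (2 * pi * real k / real n), 1:])"
proof -
  define F :: "complex poly" where "F = monom 1 n - 1"
  have polyF: "poly F z = z ^ n - 1" for z by (simp add: F_def poly_monom)
  have cF: "coeff F n = 1" using n by (simp add: F_def)
  have dF: "degree F = n"
  proof (rule antisym)
    show "degree F \<le> n" by (rule degree_le) (auto simp: F_def)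
    show "n \<le> degree F" using cF by (intro le_degree) simp
  qed
  have F0: "F \<noteq> 0" using cF by auto
  have lF: "lead_coeff F = 1" using cF dF by simp
  have rs: "rsquarefree F"
    unfolding rsquarefree_roots
  proof (intro allI notI)
    fix a assume a: "poly F a = 0 \<and> poly (pderiv F) a = 0"
    then have "a ^ n = 1" by (simp add: polyF)
    then have "a \<noteq> 0" using n by (auto simp: power_0_left)
    moreover have "of_nat n * a ^ (n - 1) = 0"
      using a by (simp add: F_def pderiv_diff pderiv_monom poly_monom)
    ultimately show False using n by simp
  qed
  have "F = smult (lead_coeff F) (\<Prod>z|poly F z = 0. [:-z, 1:])"
    using complex_poly_decompose_rsquarefree[OF rs] by simp
  also have "\<dots> = (\<Prod>z\<in>{z. z ^ n = 1}. [:-z, 1:])" using lF by (simp add: polyF)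
  also have "\<dots> = (\<Prod>k<n. [:- cis (2 * pi * real k / real n), 1:])"
    using prod.reindex_bij_betw[OF bij_betw_roots_unity[OF n], of "\<lambda>z. [:-z, 1:]"] by simp
  finally show ?thesis by (simp add: F_def)
qed


lemma div_div_self': "d dvd n \<Longrightarrow> n > (0::nat) \<Longrightarrow> n div (n div d) = d"
  by (elim dvdE) auto

lemma divisor_bij:
  assumes n: "n > (0::nat)"
  shows "bij_betw (\<lambda>(d, j). j * (n div d)) (SIGMA d:{d. d dvd n}. {j. j < d \<and> coprime j d}) {..<n}"
  unfolding bij_betw_def
proof (intro conjI)
  have gcdeq: "gcd (j * (n div d)) n = n div d" if "d dvd n" "coprime j d" for d j
  proof -
    have "n = (n div d) * d" using that by simp
    then have "gcd (j * (n div d)) n = gcd ((n div d) * j) ((n div d) * d)" by (metis mult.commute)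
    also have "\<dots> = (n div d) * gcd j d" by (simp add: gcd_mult_distrib_nat)
    finally show ?thesis using that by simp
  qed
  show "inj_on (\<lambda>(d, j). j * (n div d)) (SIGMA d:{d. d dvd n}. {j. j < d \<and> coprime j d})"
  proof (rule inj_onI, clarsimp)
    fix d1 j1 d2 j2
    assume h: "d1 dvd n" "j1 < d1" "coprime j1 d1" "d2 dvd n" "j2 < d2" "coprime j2 d2"
      "j1 * (n div d1) = j2 * (n div d2)"
    have "n div d1 = n div d2" using gcdeq[of d1 j1] gcdeq[of d2 j2] h by metis
    moreover have "d1 > 0" "d2 > 0" using h by auto
    ultimately have "d1 = d2" using h n
      by (metis div_div_self' neq0_conv)
    moreover have "n div d1 > 0" using h n by (metis dvd_div_eq_0_iff neq0_conv not_less0 gr0I)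
    ultimately show "d1 = d2 \<and> j1 = j2" using h by simp
  qed
  show "(\<lambda>(d, j). j * (n div d)) ` (SIGMA d:{d. d dvd n}. {j. j < d \<and> coprime j d}) = {..<n}"
  proof (intro equalityI subsetI)
    fix k assume "k \<in> (\<lambda>(d, j). j * (n div d)) ` (SIGMA d:{d. d dvd n}. {j. j < d \<and> coprime j d})"
    then obtain d j where h: "d dvd n" "j < d" "k = j * (n div d)" by auto
    have "j * (n div d) < d * (n div d)" using h n
      by (metis dvd_div_eq_0_iff mult_less_cancel2 neq0_conv gr0I)
    also have "\<dots> = n" using h by simp
    finally show "k \<in> {..<n}" using h by simp
  next
    fix k assume k: "k \<in> {..<n}"
    define g where "g = gcd k n"
    have g0: "g > 0" using n by (simp add: g_def)
    have gk: "g dvd k" and gn: "g dvd n" by (simp_all add: g_def)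
    have "n div g dvd n" using gn g0 by (auto elim!: dvdE)
    moreover have "k div g < n div g" using k gk gn g0
      by (auto elim!: dvdE)
    moreover have "coprime (k div g) (n div g)" using n unfolding g_def
      by (intro div_gcd_coprime) simp
    moreover have "(k div g) * (n div (n div g)) = k" using gk gn g0 n
      by (simp add: div_div_self')
    ultimately show "k \<in> (\<lambda>(d, j). j * (n div d)) ` (SIGMA d:{d. d dvd n}. {j. j < d \<and> coprime j d})"
      by (intro image_eqI[of _ _ "(n div g, k div g)"]) auto
  qed
qed

lemma xn1_cyc:
  assumes n: "n > (0::nat)"
  shows "(monom 1 n - 1 :: complex poly) = (\<Prod>d\<in>{d. d dvd n}. cyclotomic_complex d)"
proof -
  define g where "g k = [:- cis (2 * pi * real k / real n), 1:]" for k
  have fin: "finite {d. d dvd n}" using n by simp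
  have "(monom 1 n - 1 :: complex poly) = (\<Prod>k<n. g k)" using xn1_roots[OF n] by (simp add: g_def)
  also have "\<dots> = (\<Prod>x\<in>(SIGMA d:{d. d dvd n}. {j. j < d \<and> coprime j d}). g ((\<lambda>(d, j). j * (n div d)) x))"
    by (rule prod.reindex_bij_betw[OF divisor_bij[OF n], symmetric])
  also have "\<dots> = (\<Prod>d\<in>{d. d dvd n}. \<Prod>j\<in>{j. j < d \<and> coprime j d}. g (j * (n div d)))"
    using prod.Sigma[OF fin, of "\<lambda>d. {j. j < d \<and> coprime j d}" "\<lambda>d j. g (j * (n div d))"]
    by (simp add: split_def)
  also have "\<dots> = (\<Prod>d\<in>{d. d dvd n}. cyclotomic_complex d)"
    unfolding cyclotomic_complex_def
  proof (intro prod.cong refl)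
    fix d j assume d: "d \<in> {d. d dvd n}"
    have "real (j * (n div d)) / real n = real j / real d"
      using d n by (auto elim!: dvdE simp: field_simps)
    then show "g (j * (n div d)) = [:- cis (2 * pi * real j / real d), 1:]"
      unfolding g_def by (metis times_divide_eq_right)
  qed
  finally show ?thesis .
qed


lemma cyc_complex_monic: "lead_coeff (cyclotomic_complex d) = 1"
  unfolding cyclotomic_complex_def lead_coeff_prod by simp

lemma cyc_int_ex:
  assumes "n \<ge> (1::nat)"
  shows "\<exists>p. ci p = cyclotomic_complex n \<and> p dvd (monom 1 n - 1)"
  using assms
proof (induction n rule: less_induct)
  case (less n)
  have n: "n > 0" using less.prems by simp
  define D where "D = {d. d dvd n \<and> d < n}"
  define P where "P d = (SOME p. ci p = cyclotomic_complex d)" for d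
  have finD: "finite D" unfolding D_def by simp
  have P: "ci (P d) = cyclotomic_complex d" if "d \<in> D" for d
  proof -
    have "d \<ge> 1" "d < n" using that n unfolding D_def by (auto intro: Nat.gr0I)
    then obtain p where "ci p = cyclotomic_complex d" using less.IH by blast
    then show ?thesis unfolding P_def by (rule someI)
  qed
  define Q where "Q = (\<Prod>d\<in>D. P d)"
  have ciQ: "ci Q = (\<Prod>d\<in>D. cyclotomic_complex d)"
    unfolding Q_def ci_prod using P by (intro prod.cong) auto
  have "{d. d dvd n} = insert n D" unfolding D_def using n by (auto dest: dvd_imp_le)
  then have F: "(monom 1 n - 1 :: complex poly) = cyclotomic_complex n * ci Q"
    using xn1_cyc[OF n] finD ciQ by (simp add: D_def)
  have "of_int (lead_coeff Q) = (1::complex)"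
    using ciQ by (simp add: ci_lead[symmetric] lead_coeff_prod cyc_complex_monic)
  then have lQ: "lead_coeff Q = 1" by (metis of_int_eq_1_iff)
  then have Q0: "Q \<noteq> 0" by auto
  obtain s r where sr: "pseudo_divmod (monom 1 n - 1) Q = (s, r)" by (metis surj_pair)
  from pseudo_divmod[OF Q0 sr] lQ
  have e: "monom 1 n - 1 = Q * s + r" and rd: "r = 0 \<or> degree r < degree Q" by auto
  have "ci (monom 1 n - 1) = ci Q * ci s + ci r" using e by (simp add: ci_add ci_mult)
  then have e2: "ci Q * (cyclotomic_complex n - ci s) = ci r"
    using F by (simp add: ci_diff ci_monom algebra_simps)
  have "cyclotomic_complex n = ci s"
  proof (rule ccontr)
    assume ne: "cyclotomic_complex n \<noteq> ci s"
    have ciQ0: "ci Q \<noteq> 0" using Q0 ci_inj[of Q 0] by auto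
    have "degree (ci r) = degree (ci Q) + degree (cyclotomic_complex n - ci s)"
      using e2[symmetric] ne ciQ0 by (simp add: degree_mult_eq)
    then have "degree r \<ge> degree Q" by (simp add: ci_degree)
    moreover have "r \<noteq> 0" using e2 ne ciQ0 by auto
    ultimately show False using rd by simp
  qed
  then have "ci r = 0" using e2 by simp
  then have "r = 0" using ci_inj[of r 0] by simp
  then have "s dvd (monom 1 n - 1)" using e by simp
  then show ?case using \<open>cyclotomic_complex n = ci s\<close> by (intro exI[of _ s]) simp
qed

lemma cyclotomic_eq:
  assumes "n \<ge> 1"
  shows "ci (cyclotomic n) = cyclotomic_complex n \<and> cyclotomic n dvd (monom 1 n - 1)"
proof -
  obtain p where p: "ci p = cyclotomic_complex n" "p dvd (monom 1 n - 1)"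
    using cyc_int_ex[OF assms] by blast
  have "cyclotomic n = p" unfolding cyclotomic_def
    using p(1) ci_inj by (intro the_equality) auto
  then show ?thesis using p by simp
qed


lemma Phi_star_nz: "f \<in> Phi_star \<Longrightarrow> f \<noteq> 0"
proof (induction rule: Phi_star.induct)
  case (mult n f)
  have "monom 1 n - 1 \<noteq> (0 :: int poly)"
  proof
    assume "monom 1 n - 1 = (0 :: int poly)"
    then have "coeff (monom 1 n - 1 :: int poly) n = 0" by simp
    then show False using mult.hyps(1) by simp
  qed
  then have "cyclotomic n \<noteq> 0" using cyclotomic_eq[OF mult.hyps(1)] by auto
  then show ?case using mult.IH by simp
qed simp

lemma Phi_star_mult: "f \<in> Phi_star \<Longrightarrow> g \<in> Phi_star \<Longrightarrow> f * g \<in> Phi_star"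
  by (induction rule: Phi_star.induct) (auto simp: mult.assoc intro: Phi_star.mult)

lemma Phi_star_qinv: "f \<in> Phi_star \<Longrightarrow> \<exists>r. f dvd [:0, 1:] * r - 1"
proof (induction rule: Phi_star.induct)
  case one
  then show ?case by simp
next
  case (mult n f)
  obtain r where r: "f dvd [:0, 1:] * r - 1" using mult.IH by blast
  have "monom 1 n = [:0, 1:] * (monom 1 (n - 1) :: int poly)"
    using mult.hyps(1) by (cases n) (auto simp: monom_Suc)
  then obtain r1 where r1: "cyclotomic n dvd [:0, 1:] * r1 - 1"
    using cyclotomic_eq[OF mult.hyps(1)] by metis
  have "cyclotomic n * f dvd ([:0, 1:] * r1 - 1) * ([:0, 1:] * r - 1)"
    by (rule mult_dvd_mono[OF r1 r])
  also have "([:0, 1:] * r1 - 1) * ([:0, 1:] * r - 1) = - ([:0, 1:] * (r1 + r - [:0, 1:] * r1 * r) - 1)"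
    by (simp add: algebra_simps)
  finally have "cyclotomic n * f dvd [:0, 1:] * (r1 + r - [:0, 1:] * r1 * r) - 1"
    by (simp only: dvd_minus_iff)
  then show ?case by blast
qed

lemma q_inv_mod: "f \<in> Phi_star \<Longrightarrow> f dvd [:0, 1:] * q_inv_mod f - 1"
  unfolding q_inv_mod_def using Phi_star_qinv by (rule someI_ex)

lemma diff_dvd_power_diff: "(a::'a::comm_ring_1) - b dvd a ^ k - b ^ k"
proof (induction k)
  case (Suc k)
  have "a ^ Suc k - b ^ Suc k = a * (a ^ k - b ^ k) + (a - b) * b ^ k"
    by (simp add: algebra_simps)
  then show ?case using Suc by simp
qed simp

lemma laurent_habiro: "habiro (laurent_to_habiro p k)"
  unfolding habiro_def laurent_to_habiro_def
proof (intro ballI impI)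
  fix f g assume f: "f \<in> Phi_star" and g: "g \<in> Phi_star" and fg: "f dvd g"
  define r where "r = q_inv_mod g"
  define s where "s = q_inv_mod f"
  have hr: "f dvd [:0, 1:] * r - 1" using q_inv_mod[OF g] fg r_def dvd_trans by blast
  have hs: "f dvd [:0, 1:] * s - 1" using q_inv_mod[OF f] s_def by simp
  have "r - s = s * ([:0, 1:] * r - 1) - r * ([:0, 1:] * s - 1)" by (simp add: algebra_simps)
  also have "f dvd \<dots>" using hr hs by simp
  finally have "f dvd r - s" .
  then have "f dvd r ^ k - s ^ k" using diff_dvd_power_diff dvd_trans by blast
  then have "f dvd p * (r ^ k - s ^ k)" by simp
  then show "f dvd p * q_inv_mod g ^ k - p * q_inv_mod f ^ k"
    by (simp add: r_def s_def algebra_simps)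
qed

theorem proposition7p4:
  shows "(\<forall>x g. habiro x \<and> g \<in> Phi_star \<longrightarrow>
            (\<exists>a p k h. habiro a \<and> h \<in> Phi_star \<and>
               habiro_eq (\<lambda>f. x f * h)
                         (\<lambda>f. (a f * h + laurent_to_habiro p k f) * g)))
       \<and> (\<forall>a p k h. habiro a \<and> h \<in> Phi_star \<longrightarrow>
            (\<exists>x g. habiro x \<and> g \<in> Phi_star \<and>
               habiro_eq (\<lambda>f. x f * h)
                         (\<lambda>f. (a f * h + laurent_to_habiro p k f) * g)))"
proof (intro conjI allI impI)
  fix x g assume "habiro x \<and> g \<in> Phi_star"
  then have x: "habiro x" and g: "g \<in> Phi_star" by auto
  have g0: "g \<noteq> 0" using Phi_star_nz[OF g] .
  define a where "a f = (x (f * g) - x g) div g" for f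
  have ae: "g * a f = x (f * g) - x g" if f: "f \<in> Phi_star" for f
  proof -
    have "g dvd x (f * g) - x g"
      using x g Phi_star_mult[OF f g] unfolding habiro_def by auto
    then show ?thesis unfolding a_def by simp
  qed
  have "habiro a" unfolding habiro_def
  proof (intro ballI impI)
    fix f f' assume f: "f \<in> Phi_star" and f': "f' \<in> Phi_star" and ff: "f dvd f'"
    have "f * g dvd x (f' * g) - x (f * g)"
      using x Phi_star_mult[OF f g] Phi_star_mult[OF f' g] ff unfolding habiro_def
      by (auto intro: mult_dvd_mono)
    also have "x (f' * g) - x (f * g) = g * (a f' - a f)"
      using ae[OF f] ae[OF f'] by (simp add: algebra_simps)
    finally have "g * f dvd g * (a f' - a f)" by (simp add: mult.commute)
    then show "f dvd a f' - a f" using g0 by simp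
  qed
  moreover have "habiro_eq (\<lambda>f. x f * g) (\<lambda>f. (a f * g + laurent_to_habiro (x g) 0 f) * g)"
    unfolding habiro_eq_def laurent_to_habiro_def
  proof (intro ballI)
    fix f assume f: "f \<in> Phi_star"
    have "f dvd x (f * g) - x f"
      using x f Phi_star_mult[OF f g] unfolding habiro_def by auto
    then have "f dvd g * (x f - x (f * g))"
      by (metis dvd_mult minus_diff_eq dvd_minus_iff)
    also have "g * (x f - x (f * g)) = x f * g - (a f * g + x g * q_inv_mod f ^ 0) * g"
      using ae[OF f] by (simp add: algebra_simps)
    finally show "f dvd x f * g - (a f * g + x g * q_inv_mod f ^ 0) * g" .
  qed
  ultimately show "\<exists>a p k h. habiro a \<and> h \<in> Phi_star \<and>
               habiro_eq (\<lambda>f. x f * h)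
                         (\<lambda>f. (a f * h + laurent_to_habiro p k f) * g)"
    using g by blast
next
  fix a p k h assume "habiro a \<and> h \<in> Phi_star"
  then have a: "habiro a" and h: "h \<in> Phi_star" by auto
  define x where "x f = a f * h + laurent_to_habiro p k f" for f
  have "habiro x" unfolding habiro_def
  proof (intro ballI impI)
    fix f f' assume f: "f \<in> Phi_star" and f': "f' \<in> Phi_star" and ff: "f dvd f'"
    have "f dvd (a f' - a f) * h" using a f f' ff unfolding habiro_def by auto
    moreover have "f dvd laurent_to_habiro p k f' - laurent_to_habiro p k f"
      using laurent_habiro f f' ff unfolding habiro_def by blast
    ultimately have "f dvd (a f' - a f) * h + (laurent_to_habiro p k f' - laurent_to_habiro p k f)"
      by simp
    then show "f dvd x f' - x f" by (simp add: x_def algebra_simps)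
  qed
  moreover have "habiro_eq (\<lambda>f. x f * h) (\<lambda>f. (a f * h + laurent_to_habiro p k f) * h)"
    unfolding habiro_eq_def x_def by simp
  ultimately show "\<exists>x g. habiro x \<and> g \<in> Phi_star \<and>
               habiro_eq (\<lambda>f. x f * h)
                         (\<lambda>f. (a f * h + laurent_to_habiro p k f) * g)"
    using h by blast
qed

end
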